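(* Let $(A,C,k)$ be an instance and $W$ an affordable committee. Let $\overline{W}$ be obtained from $W$ by completion with the maximin support rule. Then $\mathrm{supp}(\overline{W})\ge\frac12\max\{\mathrm{supp}(W'):W'\subseteq C,|W'|=k\}$.
   Context: An instance $(A,C,k)$ consists of a finite nonempty candidate set $C$, voters $N=\{1,\dots,n\}$, approval sets $A_i\subseteq C$, and a committee size $1\le k\le|C|$. A committee is $W\subseteq C$ with $|W|\le k$. For a nonempty committee $W$, its maximin support is $\mathrm{supp}(W)=\min_{\emptyset\ne S\subseteq W}\frac{1}{|S|}|\{i\in N: A_i\cap S\ne\emptyset\}|$. Completion with the maximin support rule repeatedly adds to the current committee $W$ a candidate $c\notin W$ maximizing $\mathrm{supp}(W\cup\{c\})$ (ties arbitrary) until the committee has size $k$. $W$ is affordable if there are $p_i:C\to\mathbb{R}_{\ge0}$ ($i\in N$) with $p_i(c)=0$ for $c\notin A_i$, $\sum_c p_i(c)\le k/n$, $\sum_i p_i(c)=1$ for $c\in W$, $\sum_i p_i(c)=0$ for $c\notin W$. *)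

theory Defs
  imports Complex_Main
begin

definition abc_instance :: "(nat \<Rightarrow> 'c set) \<Rightarrow> 'c set \<Rightarrow> nat \<Rightarrow> nat \<Rightarrow> bool" where
  "abc_instance A C n k \<longleftrightarrow> finite C \<and> C \<noteq> {} \<and> 0 < n \<and> (\<forall>i\<in>{1..n}. A i \<subseteq> C)
     \<and> 1 \<le> k \<and> k \<le> card C"

definition committee :: "'c set \<Rightarrow> nat \<Rightarrow> 'c set \<Rightarrow> bool" where
  "committee C k W \<longleftrightarrow> W \<subseteq> C \<and> card W \<le> k"

definition approvers :: "(nat \<Rightarrow> 'c set) \<Rightarrow> nat \<Rightarrow> 'c set \<Rightarrow> nat" where
  "approvers A n S = card {i \<in> {1..n}. A i \<inter> S \<noteq> {}}"

definition supp :: "(nat \<Rightarrow> 'c set) \<Rightarrow> nat \<Rightarrow> 'c set \<Rightarrow> real" where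
  "supp A n W = Min ((\<lambda>S. real (approvers A n S) / real (card S)) ` {S. S \<subseteq> W \<and> S \<noteq> {}})"

definition affordable :: "(nat \<Rightarrow> 'c set) \<Rightarrow> 'c set \<Rightarrow> nat \<Rightarrow> nat \<Rightarrow> 'c set \<Rightarrow> bool" where
  "affordable A C n k W \<longleftrightarrow> committee C k W \<and>
     (\<exists>p :: nat \<Rightarrow> 'c \<Rightarrow> real.
        (\<forall>i\<in>{1..n}. \<forall>c\<in>C. p i c \<ge> 0) \<and>
        (\<forall>i\<in>{1..n}. \<forall>c\<in>C. c \<notin> A i \<longrightarrow> p i c = 0) \<and>
        (\<forall>i\<in>{1..n}. (\<Sum>c\<in>C. p i c) \<le> real k / real n) \<and>
        (\<forall>c\<in>W. (\<Sum>i\<in>{1..n}. p i c) = 1) \<and>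
        (\<forall>c\<in>C - W. (\<Sum>i\<in>{1..n}. p i c) = 0))"

text \<open>mm_completion A C n k W Wbar: Wbar is a possible outcome (for some tie-breaking)
  of completing W with the maximin support rule.\<close>
inductive mm_completion :: "(nat \<Rightarrow> 'c set) \<Rightarrow> 'c set \<Rightarrow> nat \<Rightarrow> nat \<Rightarrow> 'c set \<Rightarrow> 'c set \<Rightarrow> bool"
  for A C n k where
  mm_done: "card W \<ge> k \<Longrightarrow> mm_completion A C n k W W"
| mm_step: "card W < k \<Longrightarrow> c \<in> C - W \<Longrightarrow>
         (\<forall>d\<in>C - W. supp A n (insert d W) \<le> supp A n (insert c W)) \<Longrightarrow>
         mm_completion A C n k (insert c W) Wbar \<Longrightarrow> mm_completion A C n k W Wbar"

end

theory Submission
  imports Defs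
begin

lemma approvers_empty: "approvers A n {} = 0"
  by (simp add: approvers_def)

lemma approvers_mono: "X \<subseteq> Y \<Longrightarrow> approvers A n X \<le> approvers A n Y"
  unfolding approvers_def by (rule card_mono) auto

lemma approvers_le_n: "approvers A n X \<le> n"
proof -
  have "approvers A n X \<le> card {1..n}"
    unfolding approvers_def by (rule card_mono) auto
  thus ?thesis by simp
qed

lemma approvers_submod:
  "approvers A n (X \<union> Y) + approvers A n (X \<inter> Y) \<le> approvers A n X + approvers A n Y"
proof -
  let ?N = "\<lambda>X. {i \<in> {1..n}. A i \<inter> X \<noteq> {}}"
  have u: "?N (X \<union> Y) = ?N X \<union> ?N Y" by auto
  have i: "?N (X \<inter> Y) \<subseteq> ?N X \<inter> ?N Y" by auto
  have "card (?N (X \<inter> Y)) \<le> card (?N X \<inter> ?N Y)" by (rule card_mono[OF _ i]) auto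
  moreover have "card (?N X \<union> ?N Y) + card (?N X \<inter> ?N Y) = card (?N X) + card (?N Y)"
    by (rule card_Un_Int[symmetric]) auto
  ultimately show ?thesis unfolding approvers_def u by linarith
qed

lemma supp_ge_iff:
  assumes "finite X" "X \<noteq> {}"
  shows "s \<le> supp A n X \<longleftrightarrow> (\<forall>S. S \<subseteq> X \<and> S \<noteq> {} \<longrightarrow> s * card S \<le> real (approvers A n S))"
proof -
  have fin: "finite {S. S \<subseteq> X \<and> S \<noteq> {}}" using assms(1) by simp
  have ne: "{S. S \<subseteq> X \<and> S \<noteq> {}} \<noteq> {}" using assms(2) by auto
  have "s \<le> supp A n X \<longleftrightarrow> (\<forall>S. S \<subseteq> X \<and> S \<noteq> {} \<longrightarrow> s \<le> real (approvers A n S) / card S)"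
    unfolding supp_def using fin ne by (auto simp: Min_ge_iff)
  also have "\<dots> \<longleftrightarrow> (\<forall>S. S \<subseteq> X \<and> S \<noteq> {} \<longrightarrow> s * card S \<le> real (approvers A n S))"
  proof -
    have "s \<le> real (approvers A n S) / card S \<longleftrightarrow> s * card S \<le> real (approvers A n S)"
      if "S \<subseteq> X" "S \<noteq> {}" for S
    proof -
      have "finite S" using that assms(1) finite_subset by blast
      hence "real (card S) > 0" using that by auto
      thus ?thesis by (simp add: pos_le_divide_eq)
    qed
    thus ?thesis by blast
  qed
  finally show ?thesis .
qed


lemma exists_good:
  fixes s :: real
  assumes finC: "finite C" and BC: "B \<subseteq> C" and cardB: "card B < k"
    and WC: "Ws \<subseteq> C" and cardW: "card Ws = k" and s0: "0 \<le> s"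
    and hW: "\<And>S. S \<subseteq> Ws \<Longrightarrow> S \<noteq> {} \<Longrightarrow> 2 * s * card S \<le> real (approvers A n S)"
    and hB: "\<And>S. S \<subseteq> B \<Longrightarrow> S \<noteq> {} \<Longrightarrow> s * card S \<le> real (approvers A n S)"
  shows "\<exists>d\<in>C - B. \<forall>S. S \<subseteq> insert d B \<and> S \<noteq> {} \<longrightarrow> s * card S \<le> real (approvers A n S)"
proof (rule ccontr)
  define F where "F = (\<lambda>Y. real (approvers A n Y) - s * card Y)"
  define D where "D = Ws - B"
  assume neg: "\<not> ?thesis"
  have "\<exists>S. S \<subseteq> insert d B \<and> S \<noteq> {} \<and> F S < 0" if dD: "d \<in> D" for d
  proof -
    have "d \<in> C - B" using dD WC unfolding D_def by auto
    with neg obtain S where "S \<subseteq> insert d B" "S \<noteq> {}"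
        "\<not> s * card S \<le> real (approvers A n S)" by blast
    thus ?thesis unfolding F_def by (intro exI[of _ S]) simp
  qed
  then obtain X where X: "\<And>d. d \<in> D \<Longrightarrow> X d \<subseteq> insert d B \<and> X d \<noteq> {} \<and> F (X d) < 0"
    by metis
  have finB: "finite B" using finC BC finite_subset by blast
  have finW: "finite Ws" using finC WC finite_subset by blast
  have finD: "finite D" using finW D_def by simp
  have dX: "d \<in> X d" if "d \<in> D" for d
  proof (rule ccontr)
    assume "d \<notin> X d"
    hence "X d \<subseteq> B" using X[OF that] by auto
    hence "0 \<le> F (X d)" using hB[of "X d"] X[OF that] unfolding F_def by auto
    thus False using X[OF that] by simp
  qed
  have finX: "finite (X d)" if "d \<in> D" for d
    using X[OF that] finB finite_subset by (metis finite_insert)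
  have FB: "0 \<le> F T" if "T \<subseteq> B" for T
  proof (cases "T = {}")
    case True thus ?thesis by (simp add: F_def approvers_empty)
  next
    case False thus ?thesis using hB[OF that] by (simp add: F_def)
  qed
  have main: "E \<subseteq> D \<Longrightarrow> F (\<Union>d\<in>E. X d) < 0" if "finite E" "E \<noteq> {}" for E
    using that
  proof (induction E rule: finite_ne_induct)
    case (singleton x) thus ?case using X by auto
  next
    case (insert d E)
    let ?U = "\<Union>e\<in>E. X e"
    have IH: "F ?U < 0" using insert by auto
    have dD: "d \<in> D" using insert by auto
    have Usub: "?U \<subseteq> B \<union> E" using X insert.prems by blast
    have dB: "d \<notin> B" using dD D_def by auto
    have "X d \<inter> ?U \<subseteq> B" using X[OF dD] Usub dB insert.hyps by blast
    hence I: "0 \<le> F (X d \<inter> ?U)" by (rule FB)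
    have finU: "finite ?U" using finX insert by auto
    have c: "card (X d \<union> ?U) + card (X d \<inter> ?U) = card (X d) + card ?U"
      using card_Un_Int[OF finX[OF dD] finU] by simp
    have sm: "approvers A n (X d \<union> ?U) + approvers A n (X d \<inter> ?U) \<le> approvers A n (X d) + approvers A n ?U"
      by (rule approvers_submod)
    have "real (card (X d \<union> ?U)) + real (card (X d \<inter> ?U)) = real (card (X d)) + real (card ?U)"
      using c by (metis of_nat_add)
    hence "F (X d \<union> ?U) + F (X d \<inter> ?U) \<le> F (X d) + F ?U"
    proof -
      have "real (approvers A n (X d \<union> ?U)) + real (approvers A n (X d \<inter> ?U)) \<le> real (approvers A n (X d)) + real (approvers A n ?U)"
        using sm by (metis of_nat_add of_nat_mono)
      moreover have "s * real (card (X d \<union> ?U)) + s * real (card (X d \<inter> ?U)) = s * real (card (X d)) + s * real (card ?U)"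
        using \<open>real (card (X d \<union> ?U)) + real (card (X d \<inter> ?U)) = real (card (X d)) + real (card ?U)\<close>
        by (metis distrib_left)
      ultimately show ?thesis unfolding F_def by linarith
    qed
    moreover have "(\<Union>e\<in>insert d E. X e) = X d \<union> ?U" by simp
    ultimately show ?case using I IH X[OF dD] by simp
  qed
  define Y where "Y = (\<Union>d\<in>D. X d)"
  have Dne: "D \<noteq> {}"
  proof
    assume "D = {}"
    hence "Ws \<subseteq> B" unfolding D_def by auto
    hence "card Ws \<le> card B" using card_mono finB by blast
    thus False using cardW cardB by simp
  qed
  have FY: "F Y < 0" unfolding Y_def using main[OF finD Dne] by simp
  have finY: "finite Y" unfolding Y_def using finD finX by auto
  define Z where "Z = Y \<inter> Ws"
  have DZ: "D \<subseteq> Z" unfolding Z_def Y_def using dX D_def by auto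
  have Zne: "Z \<noteq> {}" using DZ Dne by auto
  have finZ: "finite Z" using finY Z_def by simp
  have hZ: "2 * s * card Z \<le> real (approvers A n Z)" using hW[of Z] Zne Z_def by auto
  have aYZ: "approvers A n Z \<le> approvers A n Y" unfolding Z_def by (rule approvers_mono) (rule Int_lower1)
  have YsubB: "Y - Ws \<subseteq> B - Ws" 
  proof
    fix x assume "x \<in> Y - Ws"
    then obtain d where "d \<in> D" "x \<in> X d" "x \<notin> Ws" unfolding Y_def by auto
    thus "x \<in> B - Ws" using X[of d] D_def by auto
  qed
  have c1: "card (Y - Ws) \<le> card (B - Ws)" using card_mono[OF _ YsubB] finB by simp
  have c2: "card (B - Ws) + card (B \<inter> Ws) = card B"
    using card_Int_Diff[OF finB, of Ws] by simp
  have c3: "card D + card (B \<inter> Ws) = k"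
    unfolding D_def using cardW card_Int_Diff[OF finW, of B] by (simp add: Int_commute)
  have c4: "card D \<le> card Z" using card_mono[OF finZ DZ] .
  have c5: "card Y = card Z + card (Y - Ws)"
    unfolding Z_def using finY by (metis card_Int_Diff)
  have "card Y \<le> 2 * card Z" using c1 c2 c3 c4 c5 cardB by linarith
  hence "real (card Y) \<le> 2 * real (card Z)" by linarith
  hence "s * card Y \<le> 2 * s * card Z" using s0 by (metis mult.assoc mult.commute mult_left_mono)
  hence "0 \<le> F Y" unfolding F_def using hZ aYZ by linarith
  thus False using FY by simp
qed


lemma afford_bound:
  assumes inst: "abc_instance A C n k" and aff: "affordable A C n k W"
    and SW: "S \<subseteq> W" and Sne: "S \<noteq> {}"
  shows "real (card S) \<le> real (approvers A n S) * (real k / real n)"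
proof -
  from aff obtain p :: "nat \<Rightarrow> 'a \<Rightarrow> real" where
    p0: "\<forall>i\<in>{1..n}. \<forall>c\<in>C. p i c \<ge> 0" and
    pA: "\<forall>i\<in>{1..n}. \<forall>c\<in>C. c \<notin> A i \<longrightarrow> p i c = 0" and
    pb: "\<forall>i\<in>{1..n}. (\<Sum>c\<in>C. p i c) \<le> real k / real n" and
    pW: "\<forall>c\<in>W. (\<Sum>i\<in>{1..n}. p i c) = 1"
    unfolding affordable_def by blast
  have WC: "W \<subseteq> C" using aff unfolding affordable_def committee_def by blast
  have finC: "finite C" using inst unfolding abc_instance_def by blast
  have SC: "S \<subseteq> C" using SW WC by blast
  have finS: "finite S" using SC finC finite_subset by blast
  have "(\<Sum>c\<in>S. (\<Sum>i\<in>{1..n}. p i c)) = (\<Sum>c\<in>S. (1::real))"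
    by (rule sum.cong) (use pW SW in auto)
  hence "real (card S) = (\<Sum>c\<in>S. (\<Sum>i\<in>{1..n}. p i c))" by simp
  also have "\<dots> = (\<Sum>i\<in>{1..n}. (\<Sum>c\<in>S. p i c))" by (rule sum.swap)
  also have "\<dots> \<le> (\<Sum>i\<in>{1..n}. if A i \<inter> S \<noteq> {} then real k / real n else 0)"
  proof (rule sum_mono)
    fix i assume i: "i \<in> {1..n}"
    show "(\<Sum>c\<in>S. p i c) \<le> (if A i \<inter> S \<noteq> {} then real k / real n else 0)"
    proof (cases "A i \<inter> S \<noteq> {}")
      case True
      have "(\<Sum>c\<in>S. p i c) \<le> (\<Sum>c\<in>C. p i c)"
        by (rule sum_mono2[OF finC SC]) (use p0 i in auto)
      moreover have "(\<Sum>c\<in>C. p i c) \<le> real k / real n" using pb i by blast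
      ultimately show ?thesis using True by simp
    next
      case False
      have "(\<Sum>c\<in>S. p i c) = 0"
      proof (rule sum.neutral, rule ballI)
        fix x assume "x \<in> S"
        hence "x \<in> C" "x \<notin> A i" using SC False by auto
        thus "p i x = 0" using pA i by blast
      qed
      thus ?thesis using False by simp
    qed
  qed
  also have "\<dots> = (\<Sum>i\<in>{i \<in> {1..n}. A i \<inter> S \<noteq> {}}. real k / real n)"
    by (rule sum.inter_filter[symmetric]) simp
  also have "\<dots> = real (approvers A n S) * (real k / real n)"
    unfolding approvers_def by simp
  finally show ?thesis .
qed

theorem theorem8:
  fixes A :: "nat \<Rightarrow> 'c set" and C :: "'c set" and n k :: nat and W Wbar :: "'c set"
  assumes "abc_instance A C n k"
    and "affordable A C n k W"
    and "mm_completion A C n k W Wbar"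
  shows "supp A n Wbar \<ge> 1/2 * Max ((\<lambda>W'. supp A n W') ` {W'. W' \<subseteq> C \<and> card W' = k})"
proof -
  note inst = assms(1)
  have finC: "finite C" and k1: "1 \<le> k" and kC: "k \<le> card C" and n0: "0 < n"
    using inst unfolding abc_instance_def by auto
  define K where "K = {W'. W' \<subseteq> C \<and> card W' = k}"
  have finK: "finite K" unfolding K_def using finC by simp
  obtain W0 where "W0 \<subseteq> C" "card W0 = k" using obtain_subset_with_card_n[OF kC] by metis
  hence Kne: "K \<noteq> {}" unfolding K_def by auto
  have "Max ((\<lambda>W'. supp A n W') ` K) \<in> (\<lambda>W'. supp A n W') ` K"
    using finK Kne by (intro Max_in) auto
  then obtain Ws where WsK: "Ws \<in> K" and tdef: "Max ((\<lambda>W'. supp A n W') ` K) = supp A n Ws"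
    by auto
  define t where "t = supp A n Ws"
  have WsC: "Ws \<subseteq> C" and cardWs: "card Ws = k" using WsK unfolding K_def by auto
  have finWs: "finite Ws" using WsC finC finite_subset by blast
  have Wsne: "Ws \<noteq> {}" using cardWs k1 by auto
  have hW: "\<And>S. S \<subseteq> Ws \<Longrightarrow> S \<noteq> {} \<Longrightarrow> t * card S \<le> real (approvers A n S)"
    using supp_ge_iff[OF finWs Wsne, of t A n] unfolding t_def by auto
  have t0: "0 \<le> t"
    using supp_ge_iff[OF finWs Wsne, of 0 A n] unfolding t_def by auto
  have "t * k \<le> real n"
    using hW[OF order_refl Wsne] cardWs approvers_le_n[of A n Ws] by (simp add: of_nat_mono order_trans)
  hence tk: "t \<le> real n / real k" using k1 by (simp add: pos_le_divide_eq)
  define s where "s = t / 2"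
  have s0: "0 \<le> s" using t0 s_def by simp
  have inv: "mm_completion A C n k V Vbar \<Longrightarrow> V \<subseteq> C \<Longrightarrow> (V = {} \<or> s \<le> supp A n V) \<Longrightarrow> s \<le> supp A n Vbar"
    for V Vbar
  proof (induction rule: mm_completion.induct)
    case (mm_done V)
    then show ?case using k1 by auto
  next
    case (mm_step V c Vbar)
    have finV: "finite V" using mm_step.prems finC finite_subset by blast
    have hB: "\<And>S. S \<subseteq> V \<Longrightarrow> S \<noteq> {} \<Longrightarrow> s * card S \<le> real (approvers A n S)"
    proof -
      fix S assume "S \<subseteq> V" "S \<noteq> {}"
      hence "V \<noteq> {}" by auto
      hence "s \<le> supp A n V" using mm_step.prems by auto
      thus "s * card S \<le> real (approvers A n S)"
        using supp_ge_iff[OF finV \<open>V \<noteq> {}\<close>] \<open>S \<subseteq> V\<close> \<open>S \<noteq> {}\<close> by auto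
    qed
    have hW2: "\<And>S. S \<subseteq> Ws \<Longrightarrow> S \<noteq> {} \<Longrightarrow> 2 * s * card S \<le> real (approvers A n S)"
    proof -
      fix S assume "S \<subseteq> Ws" "S \<noteq> {}"
      moreover have "2 * s * card S = t * card S" using s_def by simp
      ultimately show "2 * s * card S \<le> real (approvers A n S)" using hW by metis
    qed
    obtain d where dCV: "d \<in> C - V" and
      dgood: "\<forall>S. S \<subseteq> insert d V \<and> S \<noteq> {} \<longrightarrow> s * card S \<le> real (approvers A n S)"
      using exists_good[OF finC mm_step.prems(1) mm_step.hyps(1) WsC cardWs s0 hW2 hB] by blast
    have "s \<le> supp A n (insert d V)"
      using supp_ge_iff[of "insert d V" s A n] finV dgood by auto
    also have "\<dots> \<le> supp A n (insert c V)" using mm_step.hyps(3) dCV by blast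
    finally have "s \<le> supp A n (insert c V)" .
    moreover have "insert c V \<subseteq> C" using mm_step.hyps(2) mm_step.prems(1) by blast
    ultimately show ?case using mm_step.IH by blast
  qed
  have WC: "W \<subseteq> C" using assms(2) unfolding affordable_def committee_def by blast
  have finW: "finite W" using WC finC finite_subset by blast
  have init: "W = {} \<or> s \<le> supp A n W"
  proof (cases "W = {}")
    case False
    have "s * card S \<le> real (approvers A n S)" if "S \<subseteq> W" "S \<noteq> {}" for S
    proof -
      have b: "real (card S) \<le> real (approvers A n S) * (real k / real n)"
        by (rule afford_bound[OF inst assms(2) that])
      have "s * card S \<le> t * card S" using s_def t0 by (simp add: mult_right_mono)
      also have "\<dots> \<le> (real n / real k) * (real (approvers A n S) * (real k / real n))"
        using tk b t0 by (meson mult_mono of_nat_0_le_iff order_trans)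
      also have "\<dots> = real (approvers A n S)" using n0 k1 by simp
      finally show ?thesis .
    qed
    thus ?thesis using supp_ge_iff[OF finW False] by auto
  qed simp
  have "s \<le> supp A n Wbar" using inv[OF assms(3) WC init] .
  thus ?thesis using tdef unfolding K_def[symmetric] t_def[symmetric] s_def by simp
qed

end
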